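(* Let $T$ be a tree. No shortest path $(c_0,c_1,\dots,c_r)$ in $\mathcal{C}_3(T)$ contains a pair of opposite edges; that is, there are no indices $i\neq j$ and vertex $v$ such that both steps $c_i\to c_{i+1}$ and $c_j\to c_{j+1}$ change the color of $v$ and $c_{i+1}(v)-c_i(v)=-(c_{j+1}(v)-c_j(v))$ in $\mathbb{Z}/3\mathbb{Z}$.
   Context: Let $T$ be a finite tree with vertex set $V$ and edge set $E$. A proper 3-coloring of $T$ is a map $f\colon V\to\mathbb{Z}/3\mathbb{Z}$ with $f(u)\neq f(v)$ for every edge $uv\in E$. The 3-coloring graph $\mathcal{C}_3(T)$ has the proper 3-colorings as vertices, two colorings adjacent iff they differ at exactly one vertex. An edge $c\to c'$ of $\mathcal{C}_3(T)$ differing at $v$ changes the color of $v$ by $+1$ or by $-1$ in $\mathbb{Z}/3\mathbb{Z}$ (a $(+1)$-toggle or $(-1)$-toggle at $v$). *)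

theory Defs
  imports Main
begin

definition simple_graph :: "'a set \<Rightarrow> ('a \<Rightarrow> 'a \<Rightarrow> bool) \<Rightarrow> bool" where
  "simple_graph V E \<longleftrightarrow> finite V \<and> (\<forall>u v. E u v \<longrightarrow> u \<in> V \<and> v \<in> V)
     \<and> (\<forall>u v. E u v \<longrightarrow> E v u) \<and> (\<forall>v. \<not> E v v)"

definition is_walk :: "'a set \<Rightarrow> ('a \<Rightarrow> 'a \<Rightarrow> bool) \<Rightarrow> 'a list \<Rightarrow> bool" where
  "is_walk V E p \<longleftrightarrow> p \<noteq> [] \<and> set p \<subseteq> V \<and> (\<forall>i. Suc i < length p \<longrightarrow> E (p ! i) (p ! Suc i))"

definition connected_graph :: "'a set \<Rightarrow> ('a \<Rightarrow> 'a \<Rightarrow> bool) \<Rightarrow> bool" where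
  "connected_graph V E \<longleftrightarrow> (\<forall>u\<in>V. \<forall>v\<in>V. \<exists>p. is_walk V E p \<and> hd p = u \<and> last p = v)"

definition has_cycle :: "'a set \<Rightarrow> ('a \<Rightarrow> 'a \<Rightarrow> bool) \<Rightarrow> bool" where
  "has_cycle V E \<longleftrightarrow> (\<exists>p. is_walk V E p \<and> length p \<ge> 3 \<and> distinct p \<and> E (last p) (hd p))"

definition is_tree :: "'a set \<Rightarrow> ('a \<Rightarrow> 'a \<Rightarrow> bool) \<Rightarrow> bool" where
  "is_tree V E \<longleftrightarrow> simple_graph V E \<and> V \<noteq> {} \<and> connected_graph V E \<and> \<not> has_cycle V E"

text \<open>Colours in Z/3Z are represented by the integers 0, 1, 2; colourings are
extensional (value 0 outside V) so that they correspond bijectively to maps V \<rightarrow> Z/3Z.\<close>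
definition proper_3col :: "'a set \<Rightarrow> ('a \<Rightarrow> 'a \<Rightarrow> bool) \<Rightarrow> ('a \<Rightarrow> int) \<Rightarrow> bool" where
  "proper_3col V E f \<longleftrightarrow> (\<forall>v\<in>V. f v \<in> {0, 1, 2}) \<and> (\<forall>v. v \<notin> V \<longrightarrow> f v = 0)
     \<and> (\<forall>u v. E u v \<longrightarrow> f u \<noteq> f v)"

definition col_adj :: "'a set \<Rightarrow> ('a \<Rightarrow> 'a \<Rightarrow> bool) \<Rightarrow> ('a \<Rightarrow> int) \<Rightarrow> ('a \<Rightarrow> int) \<Rightarrow> bool" where
  "col_adj V E c d \<longleftrightarrow> proper_3col V E c \<and> proper_3col V E d \<and> (\<exists>!v. c v \<noteq> d v)"

text \<open>A path (c_0,...,c_r) in C_3(T), given as a list of length r+1.\<close>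
definition col_walk :: "'a set \<Rightarrow> ('a \<Rightarrow> 'a \<Rightarrow> bool) \<Rightarrow> ('a \<Rightarrow> int) list \<Rightarrow> bool" where
  "col_walk V E cs \<longleftrightarrow> cs \<noteq> [] \<and> (\<forall>c\<in>set cs. proper_3col V E c)
     \<and> (\<forall>i. Suc i < length cs \<longrightarrow> col_adj V E (cs ! i) (cs ! Suc i))"

definition shortest_col_path :: "'a set \<Rightarrow> ('a \<Rightarrow> 'a \<Rightarrow> bool) \<Rightarrow> ('a \<Rightarrow> int) list \<Rightarrow> bool" where
  "shortest_col_path V E cs \<longleftrightarrow> col_walk V E cs \<and>
     (\<forall>ds. col_walk V E ds \<and> hd ds = hd cs \<and> last ds = last cs \<longrightarrow> length cs \<le> length ds)"

end

theory Submission
  imports Defs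
begin

definition hvalid :: "'a set \<Rightarrow> ('a \<Rightarrow> 'a \<Rightarrow> bool) \<Rightarrow> ('a \<Rightarrow> 'a \<Rightarrow> int) \<Rightarrow> ('a \<Rightarrow> int) \<Rightarrow> bool" where
  "hvalid V E lo h \<longleftrightarrow> (\<forall>v. v \<notin> V \<longrightarrow> h v = 0) \<and>
     (\<forall>u v. E u v \<longrightarrow> lo u v \<le> h u - h v \<and> h u - h v \<le> lo u v + 1)"

lemma lo_antisym:
  assumes sg: "simple_graph V E" and lo3: "\<forall>u v. lo u v mod 3 = 1"
    and hv: "hvalid V E lo h" and e: "E u v"
  shows "lo v u = - lo u v - 1"
proof -
  have e2: "E v u" using sg e by (auto simp: simple_graph_def)
  have a: "lo u v \<le> h u - h v" "h u - h v \<le> lo u v + 1" using hv e by (auto simp: hvalid_def)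
  have b: "lo v u \<le> h v - h u" "h v - h u \<le> lo v u + 1" using hv e2 by (auto simp: hvalid_def)
  have c: "lo u v mod 3 = 1" "lo v u mod 3 = 1" using lo3 by auto
  define x where "x = h u - h v"
  have "h v - h u = - x" unfolding x_def by simp
  with a b c show ?thesis unfolding x_def[symmetric] by presburger
qed

lemma min_valid:
  assumes "hvalid V E lo f" "hvalid V E lo g"
  shows "hvalid V E lo (\<lambda>v. min (f v) (g v))"
  unfolding hvalid_def
proof (intro conjI allI impI)
  fix v assume "v \<notin> V" then show "min (f v) (g v) = 0" using assms by (simp add: hvalid_def)
next
  fix u v assume e: "E u v"
  have a: "lo u v \<le> f u - f v" "f u - f v \<le> lo u v + 1" "lo u v \<le> g u - g v" "g u - g v \<le> lo u v + 1"
    using assms e by (auto simp: hvalid_def)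
  show "lo u v \<le> min (f u) (g u) - min (f v) (g v)" using a by (simp add: min_def)
  show "min (f u) (g u) - min (f v) (g v) \<le> lo u v + 1" using a by (simp add: min_def)
qed


lemma good_step:
  assumes sg: "simple_graph V E" and lo3: "\<forall>u v. lo u v mod 3 = 1"
    and vf: "hvalid V E lo f" and vV: "v \<in> V"
    and nb: "\<forall>u. E v u \<longrightarrow> f v - f u \<noteq> lo v u"
  shows "hvalid V E lo (f(v := f v - 1))"
proof -
  have z: "\<forall>w. w \<notin> V \<longrightarrow> (f(v := f v - 1)) w = 0" using vf vV by (auto simp: hvalid_def)
  have "lo a b \<le> (f(v := f v - 1)) a - (f(v := f v - 1)) b \<and>
        (f(v := f v - 1)) a - (f(v := f v - 1)) b \<le> lo a b + 1" if e: "E a b" for a b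
  proof -
  have ab: "a \<noteq> b" using sg e by (auto simp: simple_graph_def)
  have a: "lo a b \<le> f a - f b" "f a - f b \<le> lo a b + 1" using vf e by (auto simp: hvalid_def)
  show "lo a b \<le> (f(v := f v - 1)) a - (f(v := f v - 1)) b \<and>
        (f(v := f v - 1)) a - (f(v := f v - 1)) b \<le> lo a b + 1"
  proof (cases "a = v")
    case True
    then show ?thesis using a ab nb e by auto
  next
    case False
    show ?thesis
    proof (cases "b = v")
      case True
      have e2: "E v a" using sg e True by (auto simp: simple_graph_def)
      have "lo v a = - lo a v - 1" using lo_antisym[OF sg lo3 vf] e True by simp
      with nb e2 have "f v - f a \<noteq> - lo a v - 1" by metis
      then show ?thesis using a True False by auto
    next
      case False2: False
      then show ?thesis using a False by auto
    qed
  qed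
  qed
  with z show ?thesis unfolding hvalid_def by blast
qed

lemma descent:
  assumes tr: "is_tree V E" and lo3: "\<forall>u v. lo u v mod 3 = 1"
    and vf: "hvalid V E lo f" and vg: "hvalid V E lo g"
    and le: "\<forall>v. g v \<le> f v" and ne: "\<exists>v. g v < f v"
  shows "\<exists>v\<in>V. g v < f v \<and> hvalid V E lo (f(v := f v - 1))"
proof (rule ccontr)
  assume nex: "\<not> ?thesis"
  have sg: "simple_graph V E" using tr by (simp add: is_tree_def)
  have fin: "finite V" using sg by (simp add: simple_graph_def)
  have nocyc: "\<not> has_cycle V E" using tr by (simp add: is_tree_def)
  obtain v0 where v0: "g v0 < f v0" using ne by blast
  have v0V: "v0 \<in> V" using v0 vf vg unfolding hvalid_def by force
  define M where "M = Max ((\<lambda>v. f v - g v) ` V)"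
  define S where "S = {v\<in>V. f v - g v = M}"
  have Mge: "\<And>v. v \<in> V \<Longrightarrow> f v - g v \<le> M" unfolding M_def using fin by simp
  have "M \<in> (\<lambda>v. f v - g v) ` V" unfolding M_def using fin v0V by (intro Max_in) auto
  then obtain s0 where s0: "s0 \<in> S" unfolding S_def by auto
  have Mpos: "M > 0" using Mge[OF v0V] v0 by simp
  have blk: "\<forall>v\<in>S. \<exists>u. E v u \<and> f v - f u = lo v u \<and> u \<in> S"
  proof
    fix v assume vS: "v \<in> S"
    have vV: "v \<in> V" and gv: "g v < f v" using vS Mpos unfolding S_def by auto
    have "\<not> hvalid V E lo (f(v := f v - 1))" using nex vV gv by blast
    then obtain u where e: "E v u" and eq: "f v - f u = lo v u"
      using good_step[OF sg lo3 vf vV] by blast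
    have uV: "u \<in> V" using sg e by (auto simp: simple_graph_def)
    have "lo v u \<le> g v - g u" using vg e by (auto simp: hvalid_def)
    then have "f u - g u \<ge> M" using eq vS unfolding S_def by auto
    with Mge[OF uV] have "u \<in> S" unfolding S_def using uV by auto
    with e eq show "\<exists>u. E v u \<and> f v - f u = lo v u \<and> u \<in> S" by blast
  qed
  then obtain b where b: "\<forall>v\<in>S. E v (b v) \<and> f v - f (b v) = lo v (b v) \<and> b v \<in> S"
    by metis
  define w where "w n = (b ^^ n) s0" for n
  have wS: "w n \<in> S" for n by (induction n) (auto simp: w_def s0 b)
  have wsuc: "w (Suc n) = b (w n)" for n by (simp add: w_def)
  have wE: "E (w n) (w (Suc n))" for n using b wS wsuc by auto
  have wnb: "w (Suc (Suc n)) \<noteq> w n" for n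
  proof
    assume h: "w (Suc (Suc n)) = w n"
    have 1: "f (w n) - f (w (Suc n)) = lo (w n) (w (Suc n))" using b wS wsuc by auto
    have 2: "f (w (Suc n)) - f (w n) = lo (w (Suc n)) (w n)" using b wS[of "Suc n"] wsuc[of "Suc n"] h by auto
    have "lo (w (Suc n)) (w n) = - lo (w n) (w (Suc n)) - 1" using lo_antisym[OF sg lo3 vf wE] .
    with 1 2 show False by linarith
  qed
  have finS: "finite S" using fin unfolding S_def by simp
  have "\<not> inj w"
  proof
    assume "inj w"
    then have "infinite (range w)" using finite_imageD by blast
    moreover have "range w \<subseteq> S" using wS by auto
    ultimately show False using finS finite_subset by blast
  qed
  then obtain a1 a2 where a12: "a1 \<noteq> a2" "w a1 = w a2" unfolding inj_def by blast
  define P where "P j \<longleftrightarrow> (\<exists>i<j. w i = w j)" for j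
  have "\<exists>j. P j" using a12 unfolding P_def by (metis linorder_neqE_nat)
  define j where "j = (LEAST j. P j)"
  have Pj: "P j" unfolding j_def using \<open>\<exists>j. P j\<close> by (metis LeastI)
  have minj: "\<And>k. P k \<Longrightarrow> j \<le> k" unfolding j_def by (rule Least_le)
  obtain i where ij: "i < j" "w i = w j" using Pj unfolding P_def by blast
  have injw: "inj_on w {i..<j}"
  proof (rule inj_onI)
    fix x y assume xy: "x \<in> {i..<j}" "y \<in> {i..<j}" "w x = w y"
    show "x = y"
    proof (rule ccontr)
      assume "x \<noteq> y"
      then have "x < y \<or> y < x" by arith
      then show False
      proof
        assume "x < y" then have "P y" using xy unfolding P_def by blast
        then show False using minj xy by fastforce
      next
        assume "y < x" then have "P x" using xy unfolding P_def by metis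
        then show False using minj xy by fastforce
      qed
    qed
  qed
  define p where "p = map w [i..<j]"
  have len: "length p = j - i" unfolding p_def by simp
  have pn: "\<And>k. k < length p \<Longrightarrow> p ! k = w (i + k)" unfolding p_def by simp
  have "j - i \<noteq> 1"
  proof
    assume "j - i = 1" then have "j = Suc i" by simp
    then have "E (w i) (w i)" using wE[of i] ij by simp
    then show False using sg by (simp add: simple_graph_def)
  qed
  moreover have "j - i \<noteq> 2"
  proof
    assume "j - i = 2" then have "j = Suc (Suc i)" by simp
    then show False using wnb[of i] ij by simp
  qed
  ultimately have len3: "length p \<ge> 3" using len ij by linarith
  have "is_walk V E p"
    unfolding is_walk_def
  proof (intro conjI allI impI)
    show "p \<noteq> []" using len ij by auto
    show "set p \<subseteq> V" unfolding p_def using wS S_def by auto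
    fix k assume "Suc k < length p"
    then show "E (p ! k) (p ! Suc k)" using pn wE[of "i+k"] by simp
  qed
  moreover have "distinct p" unfolding p_def using injw by (simp add: distinct_map)
  moreover have "E (last p) (hd p)"
  proof -
    have "last p = w (j - 1)" using pn[of "length p - 1"] len3 len last_conv_nth[of p] ij by fastforce
    moreover have "hd p = w j" using pn[of 0] len3 hd_conv_nth[of p] ij by fastforce
    moreover have "Suc (j - 1) = j" using ij by simp
    ultimately show ?thesis using wE[of "j - 1"] by simp
  qed
  ultimately have "has_cycle V E" unfolding has_cycle_def using len3 by blast
  with nocyc show False by simp
qed


definition hstep :: "'a set \<Rightarrow> ('a \<Rightarrow> int) \<Rightarrow> ('a \<Rightarrow> int) \<Rightarrow> bool" where
  "hstep V h h' \<longleftrightarrow> (\<exists>v\<in>V. h' = h(v := h v - 1) \<or> h = h'(v := h' v - 1))"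

lemma sum_dec:
  fixes f g :: "'a \<Rightarrow> int"
  assumes fin: "finite V" and vV: "v \<in> V" and gt: "g v < f v"
  shows "(\<Sum>w\<in>V. \<bar>(f(v := f v - 1)) w - g w\<bar>) + 1 = (\<Sum>w\<in>V. \<bar>f w - g w\<bar>)"
proof -
  have "(\<Sum>w\<in>V. \<bar>(f(v := f v - 1)) w - g w\<bar>) = \<bar>f v - 1 - g v\<bar> + (\<Sum>w\<in>V-{v}. \<bar>(f(v := f v - 1)) w - g w\<bar>)"
    using sum.remove[OF fin vV, of "\<lambda>w. \<bar>(f(v := f v - 1)) w - g w\<bar>"] by simp
  also have "(\<Sum>w\<in>V-{v}. \<bar>(f(v := f v - 1)) w - g w\<bar>) = (\<Sum>w\<in>V-{v}. \<bar>f w - g w\<bar>)"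
    by (rule sum.cong) auto
  moreover have "\<bar>f v - 1 - g v\<bar> + 1 = \<bar>f v - g v\<bar>"
  proof -
    have "0 \<le> f v - 1 - g v" using gt by linarith
    moreover have "0 \<le> f v - g v" using gt by linarith
    ultimately show ?thesis by simp
  qed
  ultimately show ?thesis using sum.remove[OF fin vV, of "\<lambda>w. \<bar>f w - g w\<bar>"] by simp
qed

lemma walk_between:
  assumes tr: "is_tree V E" and lo3: "\<forall>u v. lo u v mod 3 = 1"
  shows "nat (\<Sum>w\<in>V. \<bar>f w - g w\<bar>) = n \<Longrightarrow> hvalid V E lo f \<Longrightarrow> hvalid V E lo g \<Longrightarrow>
    \<exists>hs. hs \<noteq> [] \<and> hd hs = f \<and> last hs = g \<and> length hs = n + 1 \<and>
      (\<forall>h\<in>set hs. hvalid V E lo h) \<and> successively (hstep V) hs"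
proof (induction n arbitrary: f g)
  have sg: "simple_graph V E" using tr by (simp add: is_tree_def)
  have fin: "finite V" using sg by (simp add: simple_graph_def)
  {
  case 0
  have "\<forall>w\<in>V. \<bar>f w - g w\<bar> = 0"
  proof -
    have "0 \<le> (\<Sum>w\<in>V. \<bar>f w - g w\<bar>)" by (simp add: sum_nonneg)
    then have "(\<Sum>w\<in>V. \<bar>f w - g w\<bar>) = 0" using 0(1) by linarith
    then show ?thesis using sum_nonneg_eq_0_iff[OF fin, of "\<lambda>w. \<bar>f w - g w\<bar>"] by simp
  qed
  then have "f = g" using 0(2,3) unfolding hvalid_def by force
  then show ?case using 0 by (intro exI[of _ "[f]"]) auto
  next
  case (Suc n)
  have "f \<noteq> g" using Suc(2) by auto
  show ?case
  proof (cases "\<exists>v. g v < f v")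
    case True
    define m where "m = (\<lambda>v. min (f v) (g v))"
    have vm: "hvalid V E lo m" unfolding m_def by (rule min_valid[OF Suc(3,4)])
    obtain v where v: "v \<in> V" "m v < f v" "hvalid V E lo (f(v := f v - 1))"
    proof -
      have "\<forall>v. m v \<le> f v" "\<exists>v. m v < f v" using True unfolding m_def by (auto simp: min_def, metis not_less)
      from descent[OF tr lo3 Suc(3) vm this] show ?thesis using that by blast
    qed
    have gv: "g v < f v" using v(2) unfolding m_def by simp
    define f' where "f' = f(v := f v - 1)"
    have "nat (\<Sum>w\<in>V. \<bar>f' w - g w\<bar>) = n"
      using sum_dec[of V v g f, OF fin v(1) gv] Suc(2) unfolding f'_def by linarith
    from Suc.IH[OF this _ Suc(4)] v(3) obtain hs where hs: "hs \<noteq> []" "hd hs = f'" "last hs = g" "length hs = n + 1"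
      "\<forall>h\<in>set hs. hvalid V E lo h" "successively (hstep V) hs" unfolding f'_def by blast
    have "hstep V f f'" unfolding hstep_def f'_def using v(1) by blast
    then show ?thesis using hs Suc(3)
      by (intro exI[of _ "f # hs"]) (auto simp: successively_Cons)
  next
    case False
    then have le: "\<forall>v. f v \<le> g v" by (simp add: not_less)
    have "\<exists>v. f v < g v" using le \<open>f \<noteq> g\<close> by (metis antisym ext not_less)
    then obtain v where v: "v \<in> V" "f v < g v" "hvalid V E lo (g(v := g v - 1))"
      using descent[OF tr lo3 Suc(4,3) le] by blast
    define g' where "g' = g(v := g v - 1)"
    have "(\<Sum>w\<in>V. \<bar>g' w - f w\<bar>) + 1 = (\<Sum>w\<in>V. \<bar>g w - f w\<bar>)"
      using sum_dec[of V v f g, OF fin v(1) v(2)] unfolding g'_def .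
    moreover have "(\<Sum>w\<in>V. \<bar>g' w - f w\<bar>) = (\<Sum>w\<in>V. \<bar>f w - g' w\<bar>)" "(\<Sum>w\<in>V. \<bar>g w - f w\<bar>) = (\<Sum>w\<in>V. \<bar>f w - g w\<bar>)"
      by (simp_all add: abs_minus_commute)
    ultimately have "nat (\<Sum>w\<in>V. \<bar>f w - g' w\<bar>) = n" using Suc(2) by linarith
    from Suc.IH[OF this Suc(3)] v(3) obtain hs where hs: "hs \<noteq> []" "hd hs = f" "last hs = g'" "length hs = n + 1"
      "\<forall>h\<in>set hs. hvalid V E lo h" "successively (hstep V) hs" unfolding g'_def by blast
    have "hstep V g' g" unfolding hstep_def g'_def using v(1) by auto
    then show ?thesis using hs Suc(4)
      by (intro exI[of _ "hs @ [g]"]) (auto simp: successively_append_iff)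
  qed
  }
qed


definition sgn3 :: "int \<Rightarrow> int" where
  "sgn3 z = (if z mod 3 = 1 then 1 else if z mod 3 = 2 then -1 else 0)"

lemma sgn3_mod: "sgn3 z mod 3 = z mod 3"
  unfolding sgn3_def by (cases "z mod 3 = 1"; cases "z mod 3 = 2"; simp; presburger)

lemma sgn3_abs: "\<bar>sgn3 z\<bar> \<le> 1"
  unfolding sgn3_def by auto

lemma sgn3_nz: "-3 < z \<Longrightarrow> z < 3 \<Longrightarrow> z \<noteq> 0 \<Longrightarrow> \<bar>sgn3 z\<bar> = 1"
  unfolding sgn3_def by (cases "z mod 3 = 1"; cases "z mod 3 = 2"; simp; presburger)

lemma sgn3_opp: "-3 < x \<Longrightarrow> x < 3 \<Longrightarrow> x \<noteq> 0 \<Longrightarrow> -3 < y \<Longrightarrow> y < 3 \<Longrightarrow> y \<noteq> 0 \<Longrightarrow>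
   x mod 3 = (- y) mod 3 \<Longrightarrow> sgn3 x + sgn3 y = 0"
  unfolding sgn3_def by (cases "x mod 3 = 1"; cases "x mod 3 = 2"; cases "y mod 3 = 1"; cases "y mod 3 = 2"; simp; presburger)

lemma col_proper:
  assumes sg: "simple_graph V E" and lo3: "\<forall>u v. lo u v mod 3 = 1" and hv: "hvalid V E lo h"
  shows "proper_3col V E (\<lambda>v. h v mod 3)"
  unfolding proper_3col_def
proof (intro conjI ballI allI impI)
  fix v show "h v mod 3 \<in> {0, 1, 2}" by (simp; presburger)
next
  fix v assume "v \<notin> V" then show "h v mod 3 = 0" using hv by (simp add: hvalid_def)
next
  fix u v assume e: "E u v"
  have a: "lo u v \<le> h u - h v" "h u - h v \<le> lo u v + 1" using hv e by (auto simp: hvalid_def)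
  have "lo u v mod 3 = 1" using lo3 by auto
  with a show "h u mod 3 \<noteq> h v mod 3" by presburger
qed

lemma col_adj_step:
  assumes sg: "simple_graph V E" and lo3: "\<forall>u v. lo u v mod 3 = 1"
    and hv: "hvalid V E lo h" and hv': "hvalid V E lo h'" and st: "hstep V h h'"
  shows "col_adj V E (\<lambda>v. h v mod 3) (\<lambda>v. h' v mod 3)"
proof -
  obtain v where "v \<in> V" and c: "h' = h(v := h v - 1) \<or> h = h'(v := h' v - 1)"
    using st unfolding hstep_def by blast
  have "\<exists>!w. h w mod 3 \<noteq> h' w mod 3"
  proof (rule ex1I[of _ v])
    show "h v mod 3 \<noteq> h' v mod 3" using c by (auto; presburger)
  next
    fix w assume "h w mod 3 \<noteq> h' w mod 3" then show "w = v" using c by (auto split: if_splits)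
  qed
  then show ?thesis unfolding col_adj_def using col_proper[OF sg lo3 hv] col_proper[OF sg lo3 hv'] by blast
qed


lemma succ_col:
  fixes hs :: "('a \<Rightarrow> int) list"
  assumes sg: "simple_graph V E" and lo3: "\<forall>u v. lo u v mod 3 = 1"
  shows "\<forall>h\<in>set hs. hvalid V E lo h \<Longrightarrow> successively (hstep V) hs \<Longrightarrow>
    successively (col_adj V E) (map (\<lambda>h w. h w mod 3) hs)"
proof -
  assume a: "\<forall>h\<in>set hs. hvalid V E lo h" "successively (hstep V) hs"
  show ?thesis unfolding successively_conv_nth
  proof (intro allI impI)
    fix i assume i: "Suc i < length (map (\<lambda>h w. h w mod 3) hs)"
    then have i': "Suc i < length hs" by simp
    have "hs ! i \<in> set hs" "hs ! Suc i \<in> set hs" using i' by auto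
    then have "col_adj V E (\<lambda>w. (hs ! i) w mod 3) (\<lambda>w. (hs ! Suc i) w mod 3)"
      using col_adj_step[OF sg lo3] a successively_nth[OF a(2) i'] by blast
    then show "col_adj V E (map (\<lambda>h w. h w mod 3) hs ! i) (map (\<lambda>h w. h w mod 3) hs ! Suc i)"
      using i' by simp
  qed
qed

theorem mainTheorem4:
  fixes V :: "'a set" and E :: "'a \<Rightarrow> 'a \<Rightarrow> bool" and cs :: "('a \<Rightarrow> int) list"
  assumes "is_tree V E"
    and "shortest_col_path V E cs"
  shows "\<not> (\<exists>i j v. i \<noteq> j \<and> Suc i < length cs \<and> Suc j < length cs
             \<and> (cs ! Suc i) v \<noteq> (cs ! i) v \<and> (cs ! Suc j) v \<noteq> (cs ! j) v
             \<and> ((cs ! Suc i) v - (cs ! i) v) mod 3 = (- ((cs ! Suc j) v - (cs ! j) v)) mod 3)"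
proof
  assume "\<exists>i j v. i \<noteq> j \<and> Suc i < length cs \<and> Suc j < length cs
             \<and> (cs ! Suc i) v \<noteq> (cs ! i) v \<and> (cs ! Suc j) v \<noteq> (cs ! j) v
             \<and> ((cs ! Suc i) v - (cs ! i) v) mod 3 = (- ((cs ! Suc j) v - (cs ! j) v)) mod 3"
  then obtain i j v where ij: "i \<noteq> j" "Suc i < length cs" "Suc j < length cs"
    "(cs ! Suc i) v \<noteq> (cs ! i) v" "(cs ! Suc j) v \<noteq> (cs ! j) v"
    "((cs ! Suc i) v - (cs ! i) v) mod 3 = (- ((cs ! Suc j) v - (cs ! j) v)) mod 3" by blast
  have tr: "is_tree V E" using assms(1) .
  have sg: "simple_graph V E" using tr by (simp add: is_tree_def)
  have fin: "finite V" using sg by (simp add: simple_graph_def)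
  have cw: "col_walk V E cs" and sh: "\<And>ds. col_walk V E ds \<Longrightarrow> hd ds = hd cs \<Longrightarrow> last ds = last cs \<Longrightarrow> length cs \<le> length ds"
    using assms(2) unfolding shortest_col_path_def by auto
  have ne: "cs \<noteq> []" using cw by (simp add: col_walk_def)
  define r where "r = length cs - 1"
  have lenr: "length cs = Suc r" using ne unfolding r_def by (cases cs) auto
  have prp: "\<And>t. t < length cs \<Longrightarrow> proper_3col V E (cs ! t)"
    using cw unfolding col_walk_def by auto
  have adj: "\<And>t. Suc t < length cs \<Longrightarrow> col_adj V E (cs ! t) (cs ! Suc t)"
    using cw unfolding col_walk_def by auto
  have vals: "\<And>t w. t < length cs \<Longrightarrow> (cs ! t) w \<in> {0,1,2}"
  proof -
    fix t w assume "t < length cs"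
    then have p: "proper_3col V E (cs ! t)" by (rule prp)
    then show "(cs ! t) w \<in> {0,1,2}" unfolding proper_3col_def by (cases "w \<in> V") auto
  qed
  have outV: "\<And>t w. t < length cs \<Longrightarrow> w \<notin> V \<Longrightarrow> (cs ! t) w = 0"
    using prp unfolding proper_3col_def by auto
  have modid: "\<And>t w. t < length cs \<Longrightarrow> (cs ! t) w mod 3 = (cs ! t) w"
  proof -
    fix t w assume "t < length cs"
    from vals[OF this, of w] show "(cs ! t) w mod 3 = (cs ! t) w" by auto
  qed
  define stp where "stp t w = sgn3 ((cs ! Suc t) w - (cs ! t) w)" for t w
  define L where "L t = (\<lambda>w. (cs ! 0) w + (\<Sum>s<t. stp s w))" for t
  define lo where "lo u v = 3 * (((cs ! 0) u - (cs ! 0) v) div 3) + 1" for u v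
  have lo3: "\<forall>u v. lo u v mod 3 = 1" unfolding lo_def by (intro allI) presburger
  have Lsuc: "L (Suc t) w = L t w + stp t w" for t w unfolding L_def by simp
  have stpbnd: "\<bar>stp t w\<bar> \<le> 1" for t w unfolding stp_def by (rule sgn3_abs)
  have stp0: "\<And>t w. (cs ! Suc t) w = (cs ! t) w \<Longrightarrow> stp t w = 0" unfolding stp_def sgn3_def by simp
  have stpnz: "\<And>t w. Suc t < length cs \<Longrightarrow> (cs ! Suc t) w \<noteq> (cs ! t) w \<Longrightarrow> \<bar>stp t w\<bar> = 1"
  proof -
    fix t w assume a: "Suc t < length cs" "(cs ! Suc t) w \<noteq> (cs ! t) w"
    have "(cs ! Suc t) w \<in> {0,1,2}" "(cs ! t) w \<in> {0,1,2}" using vals a(1) by auto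
    then show "\<bar>stp t w\<bar> = 1" unfolding stp_def using a(2) by (intro sgn3_nz) auto
  qed
  have Lmod: "\<And>t w. t < length cs \<Longrightarrow> L t w mod 3 = (cs ! t) w"
  proof -
    fix t w show "t < length cs \<Longrightarrow> L t w mod 3 = (cs ! t) w"
    proof (induction t)
      case 0 then show ?case using modid[of 0 w] unfolding L_def by simp
    next
      case (Suc t)
      have "L (Suc t) w mod 3 = (L t w mod 3 + stp t w mod 3) mod 3" unfolding Lsuc by presburger
      also have "\<dots> = ((cs ! t) w + ((cs ! Suc t) w - (cs ! t) w) mod 3) mod 3"
        using Suc unfolding stp_def sgn3_mod by simp
      also have "\<dots> = (cs ! Suc t) w mod 3" by presburger
      also have "\<dots> = (cs ! Suc t) w" using modid Suc by blast
      finally show ?case .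
    qed
  qed
  have Lvalid: "\<And>t. t < length cs \<Longrightarrow> hvalid V E lo (L t)"
  proof -
    fix t show "t < length cs \<Longrightarrow> hvalid V E lo (L t)"
    proof (induction t)
      case 0
      show ?case unfolding hvalid_def
      proof (intro conjI allI impI)
        fix w assume "w \<notin> V" then show "L 0 w = 0" using outV[of 0 w] 0 unfolding L_def by simp
      next
        fix u w assume e: "E u w"
        have "(cs ! 0) u \<noteq> (cs ! 0) w" using prp[OF 0] e unfolding proper_3col_def by auto
        moreover have "(cs ! 0) u \<in> {0,1,2}" "(cs ! 0) w \<in> {0,1,2}" using vals 0 by auto
        ultimately have "((cs ! 0) u - (cs ! 0) w) mod 3 \<noteq> 0" by auto
        then show "lo u w \<le> L 0 u - L 0 w" "L 0 u - L 0 w \<le> lo u w + 1"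
          unfolding lo_def L_def by simp_all presburger+
      qed
    next
      case (Suc t)
      have t: "t < length cs" using Suc by simp
      have hv: "hvalid V E lo (L t)" using Suc.IH t by simp
      show ?case unfolding hvalid_def
      proof (intro conjI allI impI)
        fix w assume "w \<notin> V"
        then have "(cs ! Suc t) w = (cs ! t) w" using outV Suc t by simp
        then show "L (Suc t) w = 0" using hv \<open>w \<notin> V\<close> stp0 unfolding Lsuc hvalid_def by simp
      next
        fix u w assume e: "E u w"
        have uw: "u \<noteq> w" using sg e by (auto simp: simple_graph_def)
        have a: "lo u w \<le> L t u - L t w" "L t u - L t w \<le> lo u w + 1" using hv e by (auto simp: hvalid_def)
        obtain x where x: "\<And>y. (cs ! t) y \<noteq> (cs ! Suc t) y \<longleftrightarrow> y = x"
          using adj[OF Suc.prems] unfolding col_adj_def by metis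
        have one0: "stp t u = 0 \<or> stp t w = 0"
          using stp0 x uw by metis
        have "(cs ! Suc t) u \<noteq> (cs ! Suc t) w" using prp[OF Suc.prems] e unfolding proper_3col_def by auto
        then have "L (Suc t) u mod 3 \<noteq> L (Suc t) w mod 3" using Lmod[OF Suc.prems] by simp
        then have nz: "(L t u + stp t u - (L t w + stp t w)) mod 3 \<noteq> 0" unfolding Lsuc by presburger
        have l3: "lo u w mod 3 = 1" using lo3 by auto
        have b: "\<bar>stp t u\<bar> \<le> 1" "\<bar>stp t w\<bar> \<le> 1" using stpbnd by auto
        show "lo u w \<le> L (Suc t) u - L (Suc t) w" "L (Suc t) u - L (Suc t) w \<le> lo u w + 1"
          unfolding Lsuc using a nz l3 b one0 by presburger+
      qed
    qed
  qed
  have sum1: "\<And>s. s < r \<Longrightarrow> (\<Sum>w\<in>V. \<bar>stp s w\<bar>) = 1"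
  proof -
    fix s assume s: "s < r"
    then have s1: "Suc s < length cs" using lenr by simp
    obtain x where x: "\<And>y. (cs ! s) y \<noteq> (cs ! Suc s) y \<longleftrightarrow> y = x"
      using adj[OF s1] unfolding col_adj_def by metis
    have xV: "x \<in> V" using x[of x] outV s1 by (metis Suc_lessD)
    have "(\<Sum>w\<in>V. \<bar>stp s w\<bar>) = (\<Sum>w\<in>V. if w = x then 1 else 0)"
    proof (rule sum.cong)
      fix w assume "w \<in> V"
      show "\<bar>stp s w\<bar> = (if w = x then 1 else 0)"
        using stp0[of s w] stpnz[OF s1, of w] x[of w] by auto
    qed simp
    also have "\<dots> = 1" using fin xV by simp
    finally show "(\<Sum>w\<in>V. \<bar>stp s w\<bar>) = 1" .
  qed
  have vV: "v \<in> V" using ij(2,4) outV by (metis Suc_lessD)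
  have ir: "i < r" "j < r" using ij lenr by auto
  have opp: "stp i v + stp j v = 0"
  proof -
    have "(cs ! Suc i) v \<in> {0,1,2}" "(cs ! i) v \<in> {0,1,2}" "(cs ! Suc j) v \<in> {0,1,2}" "(cs ! j) v \<in> {0,1,2}"
      using vals ij by (auto dest: Suc_lessD)
    then show ?thesis unfolding stp_def using ij(4,5,6) by (intro sgn3_opp) auto
  qed
  have inz: "\<bar>stp i v\<bar> = 1" using stpnz ij(2,4) by auto
  have strict: "\<bar>\<Sum>s<r. stp s v\<bar> < (\<Sum>s<r. \<bar>stp s v\<bar>)"
  proof -
    define A where "A = {..<r} - {i} - {j}"
    have i1: "i \<in> {..<r}" and j1: "j \<in> {..<r} - {i}" using ir ij(1) by auto
    have "(\<Sum>s<r. stp s v) = stp i v + (stp j v + (\<Sum>s\<in>A. stp s v))"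
      unfolding A_def using sum.remove[OF _ i1, of "\<lambda>s. stp s v"] sum.remove[OF _ j1, of "\<lambda>s. stp s v"] by simp
    moreover have "(\<Sum>s<r. \<bar>stp s v\<bar>) = \<bar>stp i v\<bar> + (\<bar>stp j v\<bar> + (\<Sum>s\<in>A. \<bar>stp s v\<bar>))"
      unfolding A_def using sum.remove[OF _ i1, of "\<lambda>s. \<bar>stp s v\<bar>"] sum.remove[OF _ j1, of "\<lambda>s. \<bar>stp s v\<bar>"] by simp
    moreover have "\<bar>\<Sum>s\<in>A. stp s v\<bar> \<le> (\<Sum>s\<in>A. \<bar>stp s v\<bar>)" by (rule sum_abs)
    ultimately show ?thesis using opp inz by linarith
  qed
  have Ldiff: "L r w - L 0 w = (\<Sum>s<r. stp s w)" for w unfolding L_def by simp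
  have tot: "(\<Sum>w\<in>V. \<bar>L 0 w - L r w\<bar>) < int r"
  proof -
    have "(\<Sum>w\<in>V. \<bar>L 0 w - L r w\<bar>) = (\<Sum>w\<in>V. \<bar>\<Sum>s<r. stp s w\<bar>)"
      by (intro sum.cong refl) (metis Ldiff abs_minus_commute)
    also have "\<dots> < (\<Sum>w\<in>V. \<Sum>s<r. \<bar>stp s w\<bar>)"
      using fin vV strict by (intro sum_strict_mono_ex1) auto
    also have "\<dots> = (\<Sum>s<r. \<Sum>w\<in>V. \<bar>stp s w\<bar>)" by (rule sum.swap)
    also have "\<dots> = (\<Sum>s<r. 1)" using sum1 by simp
    finally show ?thesis by simp
  qed
  have v0: "hvalid V E lo (L 0)" and vr: "hvalid V E lo (L r)" using Lvalid lenr by auto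
  obtain hs where hs: "hs \<noteq> []" "hd hs = L 0" "last hs = L r"
      "length hs = nat (\<Sum>w\<in>V. \<bar>L 0 w - L r w\<bar>) + 1"
      "\<forall>h\<in>set hs. hvalid V E lo h" "successively (hstep V) hs"
    using walk_between[OF tr lo3 refl v0 vr] by blast
  define col where "col h = (\<lambda>w. h w mod (3::int))" for h :: "'a \<Rightarrow> int"
  define ds where "ds = map col hs"
  have "successively (col_adj V E) ds"
    unfolding ds_def col_def by (rule succ_col[OF sg lo3 hs(5,6)])
  then have "col_walk V E ds"
    unfolding col_walk_def
  proof (intro conjI ballI allI impI)
    show "ds \<noteq> []" unfolding ds_def using hs(1) by simp
    fix c assume "c \<in> set ds"
    then obtain h where "h \<in> set hs" "c = col h" unfolding ds_def by auto
    then show "proper_3col V E c" using hs(5) col_proper[OF sg lo3] unfolding col_def by blast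
  next
    fix k assume "Suc k < length ds" "successively (col_adj V E) ds"
    then show "col_adj V E (ds ! k) (ds ! Suc k)" by (simp add: successively_nth)
  qed
  moreover have "hd ds = hd cs"
  proof -
    have "hd ds = col (L 0)" unfolding ds_def using hs(1,2) by (simp add: hd_map)
    also have "\<dots> = cs ! 0" unfolding col_def by (rule ext) (simp add: Lmod lenr)
    finally show ?thesis using ne by (simp add: hd_conv_nth)
  qed
  moreover have "last ds = last cs"
  proof -
    have "last ds = col (L r)" unfolding ds_def using hs(1,3) by (simp add: last_map)
    also have "\<dots> = cs ! r" unfolding col_def by (rule ext) (simp add: Lmod lenr)
    finally show ?thesis using ne lenr by (simp add: last_conv_nth)
  qed
  ultimately have "length cs \<le> length ds" by (rule sh)
  moreover have "0 \<le> (\<Sum>w\<in>V. \<bar>L 0 w - L r w\<bar>)" by (simp add: sum_nonneg)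
  then have "nat (\<Sum>w\<in>V. \<bar>L 0 w - L r w\<bar>) < r" using tot by (metis nat_less_iff)
  ultimately show False using hs(4) lenr unfolding ds_def by simp
qed

end
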